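(* Let $G$ be a graph and write $E_{v,i}=e_{v,i}+\mathcal I(G,K_3)\in\mathcal A(G,K_3)$. If $(v,w)\in E(G)$ then $E_{v,i}E_{w,j}=E_{w,j}E_{v,i}$ for all $i,j$. In particular, if $G$ is complete then $\mathcal A(G,K_3)$ is abelian.
   Context: Graphs are finite, loopless, with symmetric edge sets; $K_3$ is the complete graph on $3$ vertices $\{0,1,2\}$. With $n=|V(G)|$, $\mathbb F(n,3)$ is the free product of $n$ copies of the cyclic group of order $3$ with generators $u_v$, $\mathbb C[\mathbb F(n,3)]$ its group $*$-algebra, $\omega=e^{2\pi i/3}$, $e_{v,a}=\frac13\sum_{k=0}^{2}(\omega^{-a}u_v)^k$. $\mathcal I(G,K_3)$ is the two-sided $*$-ideal generated by $e_{v,a}e_{v,b}$ ($a\ne b$) and $e_{v,a}e_{w,a}$ ($(v,w)\in E(G)$), and $\mathcal A(G,K_3)=\mathbb C[\mathbb F(n,3)]/\mathcal I(G,K_3)$. *)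

theory Defs
  imports Complex_Main
begin

text \<open>Elements of the free product F(n,3) of n copies of Z/3 are represented by
reduced words: lists of letters (v,k), meaning u_v^k, with v < n, k in {1,2},
and no two adjacent letters with the same v.\<close>

type_synonym word = "(nat \<times> nat) list"

definition letter_ok :: "nat \<Rightarrow> nat \<times> nat \<Rightarrow> bool" where
  "letter_ok n x \<longleftrightarrow> fst x < n \<and> (snd x = 1 \<or> snd x = 2)"

fun reduced :: "nat \<Rightarrow> word \<Rightarrow> bool" where
  "reduced n [] = True"
| "reduced n [x] = letter_ok n x"
| "reduced n (x # y # r) = (letter_ok n x \<and> fst x \<noteq> fst y \<and> reduced n (y # r))"

definition Fgrp :: "nat \<Rightarrow> word set" where
  "Fgrp n = {w. reduced n w}"

fun cons_letter :: "nat \<times> nat \<Rightarrow> word \<Rightarrow> word" where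
  "cons_letter (v, k) [] = [(v, k)]"
| "cons_letter (v, k) ((v', k') # r) =
     (if v' = v then (if (k + k') mod 3 = 0 then r else (v, (k + k') mod 3) # r)
      else (v, k) # (v', k') # r)"

definition wmult :: "word \<Rightarrow> word \<Rightarrow> word" where
  "wmult a b = foldr cons_letter a b"

definition winv :: "word \<Rightarrow> word" where
  "winv w = rev (map (\<lambda>(v, k). (v, 3 - k)) w)"

definition supp :: "(word \<Rightarrow> complex) \<Rightarrow> word set" where
  "supp f = {w. f w \<noteq> 0}"

definition GA :: "nat \<Rightarrow> (word \<Rightarrow> complex) set" where
  "GA n = {f. finite (supp f) \<and> supp f \<subseteq> Fgrp n}"

definition conv :: "(word \<Rightarrow> complex) \<Rightarrow> (word \<Rightarrow> complex) \<Rightarrow> (word \<Rightarrow> complex)" where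
  "conv f g = (\<lambda>w. \<Sum>a\<in>supp f. \<Sum>b\<in>supp g. if wmult a b = w then f a * g b else 0)"

definition gadd :: "(word \<Rightarrow> complex) \<Rightarrow> (word \<Rightarrow> complex) \<Rightarrow> (word \<Rightarrow> complex)" where
  "gadd f g = (\<lambda>w. f w + g w)"

definition gsub :: "(word \<Rightarrow> complex) \<Rightarrow> (word \<Rightarrow> complex) \<Rightarrow> (word \<Rightarrow> complex)" where
  "gsub f g = (\<lambda>w. f w - g w)"

definition gscale :: "complex \<Rightarrow> (word \<Rightarrow> complex) \<Rightarrow> (word \<Rightarrow> complex)" where
  "gscale c f = (\<lambda>w. c * f w)"

definition gstar :: "(word \<Rightarrow> complex) \<Rightarrow> (word \<Rightarrow> complex)" where
  "gstar f = (\<lambda>w. cnj (f (winv w)))"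

definition delta :: "word \<Rightarrow> (word \<Rightarrow> complex)" where
  "delta g = (\<lambda>w. if w = g then 1 else 0)"

definition ugen :: "nat \<Rightarrow> (word \<Rightarrow> complex)" where
  "ugen v = delta [(v, 1)]"

fun upow :: "nat \<Rightarrow> nat \<Rightarrow> (word \<Rightarrow> complex)" where
  "upow v 0 = delta []"
| "upow v (Suc k) = conv (ugen v) (upow v k)"

definition omega :: complex where
  "omega = exp (2 * of_real pi * \<i> / 3)"

definition eproj :: "nat \<Rightarrow> nat \<Rightarrow> (word \<Rightarrow> complex)" where
  "eproj v a = (\<lambda>w. (1/3) * (\<Sum>k<3. (inverse omega) ^ (a * k) * upow v k w))"

text \<open>The two-sided *-ideal I(G,K_3) of C[F(n,3)], generated by the given elements;
the graph G has vertex set {0..<n} and edge relation E.\<close>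
inductive_set Ideal :: "nat \<Rightarrow> (nat \<Rightarrow> nat \<Rightarrow> bool) \<Rightarrow> (word \<Rightarrow> complex) set"
  for n :: nat and E :: "nat \<Rightarrow> nat \<Rightarrow> bool" where
  gen1: "\<lbrakk>v < n; a < 3; b < 3; a \<noteq> b\<rbrakk> \<Longrightarrow> conv (eproj v a) (eproj v b) \<in> Ideal n E"
| gen2: "\<lbrakk>v < n; w < n; E v w; a < 3\<rbrakk> \<Longrightarrow> conv (eproj v a) (eproj w a) \<in> Ideal n E"
| zero: "(\<lambda>_. 0) \<in> Ideal n E"
| add: "\<lbrakk>x \<in> Ideal n E; y \<in> Ideal n E\<rbrakk> \<Longrightarrow> gadd x y \<in> Ideal n E"
| lmult: "\<lbrakk>x \<in> Ideal n E; c \<in> GA n\<rbrakk> \<Longrightarrow> conv c x \<in> Ideal n E"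
| rmult: "\<lbrakk>x \<in> Ideal n E; c \<in> GA n\<rbrakk> \<Longrightarrow> conv x c \<in> Ideal n E"
| star: "x \<in> Ideal n E \<Longrightarrow> gstar x \<in> Ideal n E"

definition graph_on :: "nat \<Rightarrow> (nat \<Rightarrow> nat \<Rightarrow> bool) \<Rightarrow> bool" where
  "graph_on n E \<longleftrightarrow> (\<forall>v w. E v w \<longrightarrow> v < n \<and> w < n \<and> v \<noteq> w \<and> E w v)"

definition complete_on :: "nat \<Rightarrow> (nat \<Rightarrow> nat \<Rightarrow> bool) \<Rightarrow> bool" where
  "complete_on n E \<longleftrightarrow> (\<forall>v w. v < n \<and> w < n \<and> v \<noteq> w \<longrightarrow> E v w)"

end

theory Submission
  imports Defs "HOL-Library.Function_Algebras"
begin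


lemma reduced_Cons: "reduced n (x # r) \<longleftrightarrow> letter_ok n x \<and> reduced n r \<and> (r \<noteq> [] \<longrightarrow> fst x \<noteq> fst (hd r))"
  by (cases r) auto

lemma cons_letter_reduced:
  assumes "letter_ok n x" "reduced n z" shows "reduced n (cons_letter x z)"
proof (cases x)
  case (Pair v k)
  show ?thesis
  proof (cases z)
    case Nil then show ?thesis using assms Pair by simp
  next
    case (Cons y r)
    obtain v' k' where y: "y = (v',k')" by (cases y)
    have "reduced n r" "letter_ok n y" using assms Cons by (auto simp: reduced_Cons)
    have hr: "r \<noteq> [] \<Longrightarrow> fst (hd r) \<noteq> v'" using assms Cons y by (auto simp: reduced_Cons)
    show ?thesis
    proof (cases "v' = v")
      case True
      then show ?thesis using assms Cons y Pair hr \<open>reduced n r\<close>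
        by (auto simp: reduced_Cons letter_ok_def)
    next
      case False
      then show ?thesis using assms Cons y Pair by (auto simp: reduced_Cons)
    qed
  qed
qed

lemma wmult_Cons: "wmult (x # a) b = cons_letter x (wmult a b)"
  by (simp add: wmult_def)

lemma wmult_Nil: "wmult [] b = b" by (simp add: wmult_def)

lemma wmult_reduced: "reduced n a \<Longrightarrow> reduced n b \<Longrightarrow> reduced n (wmult a b)"
  by (induction a) (auto simp: wmult_Nil wmult_Cons reduced_Cons intro: cons_letter_reduced)

lemma cons_letter_fresh: "(r = [] \<or> fst (hd r) \<noteq> fst x) \<Longrightarrow> cons_letter x r = x # r"
  by (cases x; cases r) auto

lemma wmult_Nil2: "reduced n a \<Longrightarrow> wmult a [] = a"
proof (induction a)
  case Nil then show ?case by (simp add: wmult_Nil)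
next
  case (Cons x a)
  then show ?case by (auto simp: wmult_Cons reduced_Cons intro!: cons_letter_fresh)
qed

lemma cons_cons_same:
  assumes "k = 1 \<or> k = 2" "k' = 1 \<or> k' = 2" "reduced n z"
  shows "cons_letter (v,k) (cons_letter (v,k') z) =
     (if (k + k') mod 3 = 0 then z else cons_letter (v, (k+k') mod 3) z)"
proof (cases z)
  case Nil then show ?thesis using assms by auto
next
  case (Cons y r)
  obtain v' m where y: "y = (v',m)" by (cases y)
  have hr: "r \<noteq> [] \<Longrightarrow> fst (hd r) \<noteq> v'" and m: "m = 1 \<or> m = 2"
    using assms Cons y by (auto simp: reduced_Cons letter_ok_def)
  show ?thesis
  proof (cases "v' = v")
    case True
    have f: "cons_letter (v,j) r = (v,j) # r" for j using hr True by (intro cons_letter_fresh) auto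
    show ?thesis using assms(1,2) m Cons y True f by (elim disjE) (simp_all add: mod_Suc)
  next
    case False
    then show ?thesis using assms Cons y by auto
  qed
qed

lemma wmult_cons_letter:
  assumes "letter_ok n x" "reduced n d" "reduced n c"
  shows "wmult (cons_letter x d) c = cons_letter x (wmult d c)"
proof -
  obtain v k where x: "x = (v,k)" by (cases x)
  have k: "k = 1 \<or> k = 2" using assms x by (auto simp: letter_ok_def)
  show ?thesis
  proof (cases d)
    case Nil then show ?thesis using x by (simp add: wmult_def)
  next
    case (Cons y r)
    obtain v' k' where y: "y = (v',k')" by (cases y)
    have k': "k' = 1 \<or> k' = 2" and rr: "reduced n r" using assms Cons y by (auto simp: reduced_Cons letter_ok_def)
    have wr: "reduced n (wmult r c)" using rr assms by (simp add: wmult_reduced)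
    show ?thesis
    proof (cases "v' = v")
      case True
      have "cons_letter (v,k) (cons_letter (v,k') (wmult r c)) =
        (if (k + k') mod 3 = 0 then wmult r c else cons_letter (v, (k+k') mod 3) (wmult r c))"
        by (rule cons_cons_same[OF k k' wr])
      then show ?thesis using Cons y x True by (auto simp: wmult_Cons)
    next
      case False
      then show ?thesis using Cons y x by (auto simp: wmult_Cons)
    qed
  qed
qed

lemma wmult_assoc:
  "reduced n a \<Longrightarrow> reduced n b \<Longrightarrow> reduced n c \<Longrightarrow> wmult (wmult a b) c = wmult a (wmult b c)"
proof (induction a)
  case Nil then show ?case by (simp add: wmult_Nil)
next
  case (Cons x a)
  have "letter_ok n x" "reduced n a" using Cons.prems by (auto simp: reduced_Cons)
  then show ?case using Cons
    by (simp add: wmult_Cons wmult_cons_letter wmult_reduced)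
qed



lemma delta_apply: "delta g w = (if w = g then 1 else 0)" by (simp add: delta_def)

lemma conv_eq:
  assumes "finite A" "supp f \<subseteq> A" "finite B" "supp g \<subseteq> B"
  shows "conv f g w = (\<Sum>a\<in>A. \<Sum>b\<in>B. if wmult a b = w then f a * g b else 0)"
proof -
  have fa: "finite (supp f)" "finite (supp g)" using assms finite_subset by auto
  have "conv f g w = (\<Sum>a\<in>supp f. \<Sum>b\<in>B. if wmult a b = w then f a * g b else 0)"
    unfolding conv_def
    by (intro sum.cong refl sum.mono_neutral_left assms) (auto simp: supp_def)
  also have "\<dots> = (\<Sum>a\<in>A. \<Sum>b\<in>B. if wmult a b = w then f a * g b else 0)"
    by (intro sum.mono_neutral_left assms) (auto simp: supp_def intro!: sum.neutral split: if_splits)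
  finally show ?thesis .
qed

lemma supp_conv: "supp (conv f g) \<subseteq> (\<lambda>(a,b). wmult a b) ` (supp f \<times> supp g)"
proof
  fix w assume "w \<in> supp (conv f g)"
  then have "conv f g w \<noteq> 0" by (simp add: supp_def)
  then obtain a where a: "a \<in> supp f" "(\<Sum>b\<in>supp g. if wmult a b = w then f a * g b else 0) \<noteq> 0"
    unfolding conv_def by (rule sum.not_neutral_contains_not_neutral)
  obtain b where "b \<in> supp g" "(if wmult a b = w then f a * g b else 0) \<noteq> 0"
    using a(2) by (rule sum.not_neutral_contains_not_neutral)
  then have "a \<in> supp f" "b \<in> supp g" "wmult a b = w" using a by (auto split: if_splits)
  then show "w \<in> (\<lambda>(a,b). wmult a b) ` (supp f \<times> supp g)" by force
qed

lemma finite_supp_conv: "finite (supp (conv f g))"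
proof (cases "finite (supp f) \<and> finite (supp g)")
  case True
  then show ?thesis by (intro finite_subset[OF supp_conv] finite_imageI finite_cartesian_product) auto
next
  case False
  then have "conv f g = (\<lambda>_. 0)" unfolding conv_def by auto
  then show ?thesis by (simp add: supp_def)
qed

lemma supp_add: "supp (f + g) \<subseteq> supp f \<union> supp g" by (auto simp: supp_def)
lemma supp_diff: "supp (f - g) \<subseteq> supp f \<union> supp g" by (auto simp: supp_def)
lemma supp_scale: "supp (gscale c f) \<subseteq> supp f" by (auto simp: supp_def gscale_def)
lemma supp_delta: "supp (delta a) = {a}" by (auto simp: supp_def delta_def)
lemma supp_zero: "supp 0 = {}" by (auto simp: supp_def)
lemma supp_sum: "finite S \<Longrightarrow> supp (sum F S) \<subseteq> (\<Union>i\<in>S. supp (F i))"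
  by (induction S rule: finite_induct) (auto simp: supp_def)

lemma conv_add_left:
  assumes "finite (supp f)" "finite (supp h)" "finite (supp g)"
  shows "conv (f + h) g = conv f g + conv h g"
proof
  fix w
  let ?A = "supp f \<union> supp h"
  have "conv (f + h) g w = (\<Sum>a\<in>?A. \<Sum>b\<in>supp g. if wmult a b = w then (f + h) a * g b else 0)"
    using assms supp_add by (intro conv_eq) auto
  also have "\<dots> = (\<Sum>a\<in>?A. \<Sum>b\<in>supp g. if wmult a b = w then f a * g b else 0)
     + (\<Sum>a\<in>?A. \<Sum>b\<in>supp g. if wmult a b = w then h a * g b else 0)"
    by (simp add: sum.distrib[symmetric] distrib_right if_distrib cong: if_cong)
  also have "\<dots> = conv f g w + conv h g w"
    using assms by (simp add: conv_eq[of ?A])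
  finally show "conv (f + h) g w = (conv f g + conv h g) w" by simp
qed

lemma conv_add_right:
  assumes "finite (supp f)" "finite (supp h)" "finite (supp g)"
  shows "conv g (f + h) = conv g f + conv g h"
proof
  fix w
  let ?A = "supp f \<union> supp h"
  have "conv g (f + h) w = (\<Sum>b\<in>supp g. \<Sum>a\<in>?A. if wmult b a = w then g b * (f + h) a else 0)"
    using assms supp_add by (intro conv_eq) auto
  also have "\<dots> = (\<Sum>b\<in>supp g. \<Sum>a\<in>?A. if wmult b a = w then g b * f a else 0)
     + (\<Sum>b\<in>supp g. \<Sum>a\<in>?A. if wmult b a = w then g b * h a else 0)"
    by (simp add: sum.distrib[symmetric] distrib_left if_distrib cong: if_cong)
  also have "\<dots> = conv g f w + conv g h w"
    using assms by (simp add: conv_eq[of _ _ ?A])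
  finally show "conv g (f + h) w = (conv g f + conv g h) w" by simp
qed

lemma conv_scale_left:
  assumes "finite (supp f)" "finite (supp g)"
  shows "conv (gscale c f) g = gscale c (conv f g)"
proof
  fix w
  have "conv (gscale c f) g w = (\<Sum>a\<in>supp f. \<Sum>b\<in>supp g. if wmult a b = w then gscale c f a * g b else 0)"
    using assms supp_scale by (intro conv_eq) auto
  also have "\<dots> = c * (\<Sum>a\<in>supp f. \<Sum>b\<in>supp g. if wmult a b = w then f a * g b else 0)"
    unfolding sum_distrib_left gscale_def by (intro sum.cong refl) auto
  finally show "conv (gscale c f) g w = gscale c (conv f g) w"
    using assms by (simp add: conv_eq gscale_def)
qed

lemma conv_scale_right:
  assumes "finite (supp f)" "finite (supp g)"
  shows "conv g (gscale c f) = gscale c (conv g f)"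
proof
  fix w
  have "conv g (gscale c f) w = (\<Sum>b\<in>supp g. \<Sum>a\<in>supp f. if wmult b a = w then g b * gscale c f a else 0)"
    using assms supp_scale by (intro conv_eq) auto
  also have "\<dots> = c * (\<Sum>b\<in>supp g. \<Sum>a\<in>supp f. if wmult b a = w then g b * f a else 0)"
    unfolding sum_distrib_left gscale_def by (intro sum.cong refl) auto
  finally show "conv g (gscale c f) w = gscale c (conv g f) w"
    using assms by (simp add: conv_eq gscale_def)
qed

lemma conv_delta: "conv (delta a) (delta b) = delta (wmult a b)"
  unfolding conv_def supp_delta by (rule ext) (simp add: delta_def)

lemma conv_unit_left:
  assumes "finite (supp f)" shows "conv (delta []) f = f"
proof
  fix w
  have "conv (delta []) f w = (\<Sum>b\<in>supp f. if b = w then f b else 0)"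
    unfolding conv_def supp_delta by (auto simp: delta_apply wmult_Nil intro!: sum.cong)
  also have "\<dots> = f w" using assms by (simp add: sum.delta' supp_def)
  finally show "conv (delta []) f w = f w" .
qed

lemma conv_unit_right:
  assumes "finite (supp f)" "supp f \<subseteq> Fgrp n" shows "conv f (delta []) = f"
proof
  fix w
  have "conv f (delta []) w = (\<Sum>b\<in>supp f. if b = w then f b else 0)"
    unfolding conv_def supp_delta using assms by (intro sum.cong refl) (auto simp: Fgrp_def wmult_Nil2 delta_apply)
  also have "\<dots> = f w" using assms by (simp add: sum.delta' supp_def)
  finally show "conv f (delta []) w = f w" .
qed



lemma sum_swap4:
  "(\<Sum>c\<in>C. \<Sum>d\<in>D. \<Sum>a\<in>A. \<Sum>b\<in>B. P a b c d) = (\<Sum>a\<in>A. \<Sum>b\<in>B. \<Sum>d\<in>D. \<Sum>c\<in>C. (P a b c d :: complex))"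
proof -
  have "(\<Sum>c\<in>C. \<Sum>d\<in>D. \<Sum>a\<in>A. \<Sum>b\<in>B. P a b c d) = (\<Sum>d\<in>D. \<Sum>c\<in>C. \<Sum>a\<in>A. \<Sum>b\<in>B. P a b c d)"
    by (rule sum.swap)
  also have "\<dots> = (\<Sum>d\<in>D. \<Sum>a\<in>A. \<Sum>c\<in>C. \<Sum>b\<in>B. P a b c d)"
    by (intro sum.cong refl sum.swap)
  also have "\<dots> = (\<Sum>d\<in>D. \<Sum>a\<in>A. \<Sum>b\<in>B. \<Sum>c\<in>C. P a b c d)"
    by (intro sum.cong refl sum.swap)
  also have "\<dots> = (\<Sum>a\<in>A. \<Sum>d\<in>D. \<Sum>b\<in>B. \<Sum>c\<in>C. P a b c d)"
    by (rule sum.swap)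
  also have "\<dots> = (\<Sum>a\<in>A. \<Sum>b\<in>B. \<Sum>d\<in>D. \<Sum>c\<in>C. P a b c d)"
    by (intro sum.cong refl sum.swap)
  finally show ?thesis .
qed

lemma sum_swap4':
  "(\<Sum>a\<in>A. \<Sum>e\<in>C. \<Sum>b\<in>B. \<Sum>d\<in>D. P a b d e) = (\<Sum>a\<in>A. \<Sum>b\<in>B. \<Sum>d\<in>D. \<Sum>e\<in>C. (P a b d e :: complex))"
proof -
  have "(\<Sum>a\<in>A. \<Sum>e\<in>C. \<Sum>b\<in>B. \<Sum>d\<in>D. P a b d e) = (\<Sum>a\<in>A. \<Sum>b\<in>B. \<Sum>e\<in>C. \<Sum>d\<in>D. P a b d e)"
    by (intro sum.cong refl sum.swap)
  also have "\<dots> = (\<Sum>a\<in>A. \<Sum>b\<in>B. \<Sum>d\<in>D. \<Sum>e\<in>C. P a b d e)"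
    by (intro sum.cong refl sum.swap)
  finally show ?thesis .
qed

lemma sum_pick:
  assumes "finite C" "k \<in> C"
  shows "(\<Sum>c\<in>C. if k = c \<and> Q c then X else 0) = (if Q k then X else (0::complex))"
proof -
  have "(\<Sum>c\<in>C. if k = c \<and> Q c then X else 0) = (\<Sum>c\<in>C. if k = c then (if Q k then X else 0) else 0)"
    by (intro sum.cong) auto
  then show ?thesis using assms by simp
qed

lemma conv_assoc:
  assumes "finite (supp f)" "finite (supp g)" "finite (supp h)"
    "supp f \<subseteq> Fgrp n" "supp g \<subseteq> Fgrp n" "supp h \<subseteq> Fgrp n"
  shows "conv (conv f g) h = conv f (conv g h)"
proof
  fix w
  let ?A = "supp f" and ?B = "supp g" and ?D = "supp h"
  let ?C = "(\<lambda>(a,b). wmult a b) ` (?A \<times> ?B)" and ?C' = "(\<lambda>(a,b). wmult a b) ` (?B \<times> ?D)"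
  have fC: "finite ?C" "finite ?C'" using assms by auto
  have "conv (conv f g) h w = (\<Sum>c\<in>?C. \<Sum>d\<in>?D. if wmult c d = w then conv f g c * h d else 0)"
    using assms fC supp_conv by (intro conv_eq) auto
  also have "\<dots> = (\<Sum>c\<in>?C. \<Sum>d\<in>?D. \<Sum>a\<in>?A. \<Sum>b\<in>?B.
      if wmult a b = c \<and> wmult c d = w then f a * g b * h d else 0)"
  proof (intro sum.cong refl)
    fix c d
    show "(if wmult c d = w then conv f g c * h d else 0) = (\<Sum>a\<in>?A. \<Sum>b\<in>?B.
      if wmult a b = c \<and> wmult c d = w then f a * g b * h d else 0)"
      using assms by (auto simp: conv_eq sum_distrib_right intro!: sum.cong)
  qed
  also have "\<dots> = (\<Sum>a\<in>?A. \<Sum>b\<in>?B. \<Sum>d\<in>?D. \<Sum>c\<in>?C.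
      if wmult a b = c \<and> wmult c d = w then f a * g b * h d else 0)"
    by (rule sum_swap4)
  also have "\<dots> = (\<Sum>a\<in>?A. \<Sum>b\<in>?B. \<Sum>d\<in>?D.
      if wmult (wmult a b) d = w then f a * g b * h d else 0)"
    using fC by (intro sum.cong refl sum_pick) auto
  also have "\<dots> = (\<Sum>a\<in>?A. \<Sum>b\<in>?B. \<Sum>d\<in>?D.
      if wmult a (wmult b d) = w then f a * g b * h d else 0)"
  proof (intro sum.cong refl)
    fix a b d assume "a \<in> ?A" "b \<in> ?B" "d \<in> ?D"
    then have "reduced n a" "reduced n b" "reduced n d" using assms(4-6) by (auto simp: Fgrp_def)
    then show "(if wmult (wmult a b) d = w then f a * g b * h d else 0) =
      (if wmult a (wmult b d) = w then f a * g b * h d else 0)" by (simp add: wmult_assoc)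
  qed
  also have "\<dots> = (\<Sum>a\<in>?A. \<Sum>b\<in>?B. \<Sum>d\<in>?D. \<Sum>e\<in>?C'.
      if wmult b d = e \<and> wmult a e = w then f a * g b * h d else 0)"
    using fC by (intro sum.cong refl sum_pick[symmetric]) auto
  also have "\<dots> = (\<Sum>a\<in>?A. \<Sum>e\<in>?C'. \<Sum>b\<in>?B. \<Sum>d\<in>?D.
      if wmult b d = e \<and> wmult a e = w then f a * g b * h d else 0)"
    by (rule sum_swap4'[symmetric])
  also have "\<dots> = (\<Sum>a\<in>?A. \<Sum>e\<in>?C'. if wmult a e = w then f a * conv g h e else 0)"
  proof (intro sum.cong refl)
    fix a e
    show "(\<Sum>b\<in>?B. \<Sum>d\<in>?D.
      if wmult b d = e \<and> wmult a e = w then f a * g b * h d else 0) = (if wmult a e = w then f a * conv g h e else 0)"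
      using assms by (auto simp: conv_eq sum_distrib_left mult.assoc intro!: sum.cong)
  qed
  also have "\<dots> = conv f (conv g h) w"
    using assms fC supp_conv by (intro conv_eq[symmetric]) auto
  finally show "conv (conv f g) h w = conv f (conv g h) w" .
qed



lemma omega3: "omega ^ 3 = 1"
proof -
  have "omega ^ 3 = exp (of_nat 3 * (2 * of_real pi * \<i> / 3))"
    unfolding omega_def by (rule exp_of_nat_mult[symmetric])
  also have "of_nat 3 * (2 * of_real pi * \<i> / 3) = 2 * of_real pi * \<i>" by simp
  finally show ?thesis by simp
qed

lemma omega_ne1: "omega \<noteq> 1"
proof
  assume "omega = 1"
  then have "Im omega = 0" by simp
  moreover have "Im omega = sin (2 * pi / 3)"
    unfolding omega_def Im_exp by simp
  moreover have "sin (2 * pi / 3) > 0" by (rule sin_gt_zero) auto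
  ultimately show False by simp
qed

lemma omega_sum: "1 + omega + omega^2 = 0"
proof -
  have "(omega - 1) * (1 + omega + omega^2) = omega^3 - 1" by (simp add: algebra_simps power2_eq_square power3_eq_cube)
  then have "(omega - 1) * (1 + omega + omega^2) = 0" by (simp add: omega3)
  then show ?thesis using omega_ne1 by simp
qed

lemma inv_omega: "inverse omega = omega^2"
proof -
  have "omega * omega^2 = 1" using omega3 by (simp add: power3_eq_cube power2_eq_square mult.assoc)
  then show ?thesis by (simp add: inverse_unique)
qed



lemma GA_iff: "f \<in> GA n \<longleftrightarrow> finite (supp f) \<and> supp f \<subseteq> Fgrp n"
  by (simp add: GA_def)

lemma GA_conv: "f \<in> GA n \<Longrightarrow> g \<in> GA n \<Longrightarrow> conv f g \<in> GA n"
proof -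
  assume a: "f \<in> GA n" "g \<in> GA n"
  have "supp (conv f g) \<subseteq> Fgrp n"
  proof
    fix x assume "x \<in> supp (conv f g)"
    then obtain a b where "a \<in> supp f" "b \<in> supp g" "x = wmult a b" using supp_conv[of f g] by auto
    then show "x \<in> Fgrp n" using a by (auto simp: GA_iff Fgrp_def intro: wmult_reduced)
  qed
  then show ?thesis using finite_supp_conv[of f g] by (simp add: GA_iff)
qed

lemma GA_add: "f \<in> GA n \<Longrightarrow> g \<in> GA n \<Longrightarrow> f + g \<in> GA n"
  unfolding GA_iff using supp_add[of f g] by (auto intro: finite_subset)

lemma GA_diff: "f \<in> GA n \<Longrightarrow> g \<in> GA n \<Longrightarrow> f - g \<in> GA n"
  unfolding GA_iff using supp_diff[of f g] by (auto intro: finite_subset)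

lemma GA_scale: "f \<in> GA n \<Longrightarrow> gscale c f \<in> GA n"
  unfolding GA_iff using supp_scale[of c f] by (auto intro: finite_subset)

lemma GA_delta: "reduced n a \<Longrightarrow> delta a \<in> GA n"
  unfolding GA_iff supp_delta by (simp add: Fgrp_def)

lemma GA_zero: "0 \<in> GA n"
  unfolding GA_iff supp_zero by simp

lemma GA_sum: "(\<And>i. i \<in> S \<Longrightarrow> F i \<in> GA n) \<Longrightarrow> sum F S \<in> GA n"
  by (induction S rule: infinite_finite_induct) (auto intro: GA_add GA_zero)

lemma GA_fin: "f \<in> GA n \<Longrightarrow> finite (supp f)" by (simp add: GA_iff)
lemma GA_sub: "f \<in> GA n \<Longrightarrow> supp f \<subseteq> Fgrp n" by (simp add: GA_iff)

lemma I_zero: "0 \<in> Ideal n E"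
  using Ideal.zero[of n E] by (simp add: zero_fun_def)

lemma I_add: "x \<in> Ideal n E \<Longrightarrow> y \<in> Ideal n E \<Longrightarrow> x + y \<in> Ideal n E"
  using Ideal.add[of x n E y] by (simp add: gadd_def plus_fun_def)

lemma I_scale:
  assumes "x \<in> Ideal n E" "x \<in> GA n" shows "gscale c x \<in> Ideal n E"
proof -
  have d: "delta [] \<in> GA n" by (rule GA_delta) simp
  have "conv (gscale c (delta [])) x \<in> Ideal n E"
    by (rule Ideal.lmult[OF assms(1) GA_scale[OF d]])
  moreover have "conv (gscale c (delta [])) x = gscale c x"
    using assms d by (simp add: conv_scale_left GA_fin conv_unit_left)
  ultimately show ?thesis by simp
qed

lemma I_diff:
  assumes "x \<in> Ideal n E" "y \<in> Ideal n E" "y \<in> GA n" shows "x - y \<in> Ideal n E"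
proof -
  have "x + gscale (-1) y \<in> Ideal n E" using assms by (intro I_add I_scale)
  moreover have "x + gscale (-1) y = x - y" by (rule ext) (simp add: gscale_def)
  ultimately show ?thesis by simp
qed

lemma I_sum: "(\<And>i. i \<in> S \<Longrightarrow> F i \<in> Ideal n E) \<Longrightarrow> sum F S \<in> Ideal n E"
  by (induction S rule: infinite_finite_induct) (auto intro: I_add I_zero)

lemma u1: "conv (ugen v) (delta []) = delta [(v,1)]"
  by (simp add: ugen_def conv_delta wmult_def)

lemma u2: "conv (ugen v) (delta [(v,Suc 0)]) = delta [(v,2)]"
  by (simp add: ugen_def conv_delta wmult_def numeral_2_eq_2)

lemma eproj_expand: "eproj v a = (\<lambda>w. 1/3 * (delta [] w + (inverse omega)^a * delta [(v,1)] w + (inverse omega)^(a*2) * delta [(v,2)] w))"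
proof -
  have "(\<Sum>k<3. (inverse omega) ^ (a * k) * upow v k w) =
     delta [] w + (inverse omega)^a * delta [(v,1)] w + (inverse omega)^(a*2) * delta [(v,2)] w" for w
    by (simp add: numeral_3_eq_3 u1 u2 add.assoc mult_2_right)
  then show ?thesis by (simp add: eproj_def)
qed

lemma GA_eproj: "v < n \<Longrightarrow> eproj v a \<in> GA n"
proof -
  assume v: "v < n"
  have "supp (eproj v a) \<subseteq> {[], [(v,1)], [(v,2)]}"
    by (auto simp: supp_def eproj_expand delta_apply)
  moreover have "{[], [(v,1)], [(v,2)]} \<subseteq> Fgrp n" using v by (auto simp: Fgrp_def letter_ok_def)
  ultimately show ?thesis unfolding GA_iff by (auto intro: finite_subset)
qed

lemma omega_mod: "omega ^ n = omega ^ (n mod 3)"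
proof -
  have "omega ^ n = omega ^ (3 * (n div 3) + n mod 3)" by simp
  also have "\<dots> = (omega ^ 3) ^ (n div 3) * omega ^ (n mod 3)" by (simp only: power_add power_mult)
  also have "\<dots> = omega ^ (n mod 3)" by (simp add: omega3)
  finally show ?thesis .
qed

lemmas omega_red = omega_mod[of 4, simplified] omega_mod[of 5, simplified] omega_mod[of 6, simplified]
  omega_mod[of 7, simplified] omega_mod[of 8, simplified] omega_mod[of 3, simplified]

lemma omega_sum': "omega^2 = - 1 - omega" using omega_sum by (simp add: algebra_simps eq_neg_iff_add_eq_0)

lemma sum_eproj: "(\<Sum>a<3. eproj v a) = delta []"
proof
  fix w
  have h: "1 + omega + omega^2 = 0" "omega^3 = 1" by (rule omega_sum, rule omega3)
  show "(\<Sum>a<3. eproj v a) w = delta [] w"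
    apply (simp add: numeral_3_eq_3 eproj_expand delta_apply inv_omega)
    apply (simp add: omega_red omega_sum' field_simps)
    done
qed



lemma conv_zero_right: "conv g 0 = 0"
  by (rule ext) (simp add: conv_def supp_zero)
lemma conv_zero_left: "conv 0 g = 0"
  by (rule ext) (simp add: conv_def supp_zero)

lemma fin_sum: "(\<And>i. i \<in> S \<Longrightarrow> finite (supp (F i))) \<Longrightarrow> finite (supp (sum F S))"
proof (cases "finite S")
  case True
  assume "\<And>i. i \<in> S \<Longrightarrow> finite (supp (F i))"
  then show ?thesis using True supp_sum[OF True, of F] by (auto intro: finite_subset)
qed (simp add: supp_zero)

lemma conv_sum_right:
  assumes "\<And>i. i \<in> S \<Longrightarrow> finite (supp (F i))" "finite (supp g)"
  shows "conv g (sum F S) = (\<Sum>i\<in>S. conv g (F i))"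
  using assms
proof (induction S rule: infinite_finite_induct)
  case (insert x S)
  have "conv g (sum F (insert x S)) = conv g (F x + sum F S)" by (simp only: sum.insert[OF insert.hyps])
  also have "\<dots> = conv g (F x) + conv g (sum F S)" by (rule conv_add_right) (use insert in \<open>auto intro: fin_sum\<close>)
  finally show ?case using insert by (simp only: sum.insert[OF insert.hyps]) auto
qed (simp_all add: conv_zero_right)

lemma conv_sum_left:
  assumes "\<And>i. i \<in> S \<Longrightarrow> finite (supp (F i))" "finite (supp g)"
  shows "conv (sum F S) g = (\<Sum>i\<in>S. conv (F i) g)"
  using assms
proof (induction S rule: infinite_finite_induct)
  case (insert x S)
  have "conv (sum F (insert x S)) g = conv (F x + sum F S) g" by (simp only: sum.insert[OF insert.hyps])
  also have "\<dots> = conv (F x) g + conv (sum F S) g" by (rule conv_add_left) (use insert in \<open>auto intro: fin_sum\<close>)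
  finally show ?case using insert by (simp only: sum.insert[OF insert.hyps]) auto
qed (simp_all add: conv_zero_left)

lemma ugen_eproj: "delta [(v,1)] = (\<Sum>a<3. gscale (omega^a) (eproj v a))"
proof
  fix w
  have f1: "3 + (omega * (3 * omega ^ 4) + omega * (omega * (3 * omega ^ 8))) = 0"
    using omega3 omega_sum by algebra
  have f2: "3 + (omega * 3 + omega * (omega * 3)) = 0"
    using omega3 omega_sum by algebra
  have f3: "omega * (3 * omega\<^sup>2) + omega * (omega * (3 * omega ^ 4)) = 6"
    using omega3 omega_sum by algebra
  show "delta [(v,1)] w = (\<Sum>a<3. gscale (omega^a) (eproj v a)) w"
    apply (simp add: numeral_3_eq_3 eproj_expand delta_apply inv_omega gscale_def)
    apply (simp add: field_simps)
    using f1 f2 f3 by auto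
qed

context
  fixes n :: nat and E :: "nat \<Rightarrow> nat \<Rightarrow> bool" and v w :: nat
  assumes v: "v < n" and w: "w < n" and evw: "E v w" "E w v"
begin

abbreviation "P \<equiv> eproj v"
abbreviation "Q \<equiv> eproj w"

lemma GP: "P a \<in> GA n" and GQ: "Q a \<in> GA n"
  using v w by (auto intro: GA_eproj)

lemmas fP = GA_fin[OF GP] and fQ = GA_fin[OF GQ] and sP = GA_sub[OF GP] and sQ = GA_sub[OF GQ]

lemma assocPQ: "x \<in> GA n \<Longrightarrow> y \<in> GA n \<Longrightarrow> z \<in> GA n \<Longrightarrow> conv (conv x y) z = conv x (conv y z)"
  by (rule conv_assoc) (auto simp: GA_iff)

lemma T:
  assumes "i < 3" "j < 3" "l < 3" "i \<noteq> l"
  shows "conv (conv (P i) (Q j)) (P l) \<in> Ideal n E"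
proof -
  have c1: "conv (conv (P i) (Q i)) (P l) \<in> Ideal n E"
    using assms v w evw by (intro Ideal.rmult[OF _ GP] Ideal.gen2) auto
  have "conv (Q l) (P l) \<in> Ideal n E"
    using assms v w evw by (intro Ideal.gen2) auto
  then have "conv (P i) (conv (Q l) (P l)) \<in> Ideal n E" by (rule Ideal.lmult[OF _ GP])
  then have c2: "conv (conv (P i) (Q l)) (P l) \<in> Ideal n E"
    by (subst assocPQ) (auto intro: GP GQ)
  show ?thesis
  proof (cases "j = i \<or> j = l")
    case True then show ?thesis using c1 c2 by auto
  next
    case False
    have S: "{..<3::nat} = insert j {i, l}" "j \<notin> {i,l}" using assms False by auto
    have "conv (P i) (P l) \<in> Ideal n E"
      using assms v by (intro Ideal.gen1) auto
    moreover have "conv (P i) (P l) = (\<Sum>b<3. conv (conv (P i) (Q b)) (P l))"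
    proof -
      have "conv (P i) (P l) = conv (conv (P i) (\<Sum>b<3. Q b)) (P l)"
        by (simp add: sum_eproj conv_unit_right[OF fP sP])
      also have "\<dots> = (\<Sum>b<3. conv (conv (P i) (Q b)) (P l))"
        by (simp add: conv_sum_right conv_sum_left fQ fP finite_supp_conv)
      finally show ?thesis .
    qed
    moreover have "(\<Sum>b<3. conv (conv (P i) (Q b)) (P l)) = conv (conv (P i) (Q j)) (P l) +
        (conv (conv (P i) (Q i)) (P l) + conv (conv (P i) (Q l)) (P l))"
      unfolding S(1) using S(2) assms by simp
    ultimately have "conv (conv (P i) (Q j)) (P l) + (conv (conv (P i) (Q i)) (P l) + conv (conv (P i) (Q l)) (P l)) \<in> Ideal n E"
      by simp
    then have "conv (conv (P i) (Q j)) (P l) + (conv (conv (P i) (Q i)) (P l) + conv (conv (P i) (Q l)) (P l))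
       - (conv (conv (P i) (Q i)) (P l) + conv (conv (P i) (Q l)) (P l)) \<in> Ideal n E"
      by (rule I_diff[OF _ I_add[OF c1 c2]]) (auto intro!: GA_add GA_conv GP GQ)
    then show ?thesis by simp
  qed
qed

lemma part1:
  assumes "i < 3" "j < 3"
  shows "conv (P i) (Q j) - conv (Q j) (P i) \<in> Ideal n E"
proof -
  let ?X = "conv (P i) (Q j)" and ?Y = "conv (Q j) (P i)"
  have GX: "?X \<in> GA n" "?Y \<in> GA n" by (auto intro: GA_conv GP GQ)
  have S: "{..<3::nat} = insert i ({..<3} - {i})" "i \<notin> {..<3} - {i}" using assms by auto
  have "?X = conv ?X (\<Sum>l<3. P l)"
    using GX by (simp add: sum_eproj conv_unit_right[of _ n] GA_iff)
  also have "\<dots> = (\<Sum>l<3. conv ?X (P l))"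
    using GX by (simp add: conv_sum_right fP GA_iff)
  also have "\<dots> = conv ?X (P i) + (\<Sum>l\<in>{..<3} - {i}. conv ?X (P l))"
    by (rule sum.remove) (use assms in auto)
  finally have X: "?X - conv ?X (P i) = (\<Sum>l\<in>{..<3} - {i}. conv ?X (P l))" by (metis add_diff_cancel_left')
  have "?Y = conv (\<Sum>l<3. P l) ?Y"
    using GX by (simp add: sum_eproj conv_unit_left GA_iff)
  also have "\<dots> = (\<Sum>l<3. conv (P l) ?Y)"
    using GX by (simp add: conv_sum_left fP GA_iff)
  also have "\<dots> = conv (P i) ?Y + (\<Sum>l\<in>{..<3} - {i}. conv (P l) ?Y)"
    by (rule sum.remove) (use assms in auto)
  finally have Y: "?Y - conv (P i) ?Y = (\<Sum>l\<in>{..<3} - {i}. conv (P l) ?Y)" by (metis add_diff_cancel_left')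
  have Z: "conv ?X (P i) = conv (P i) ?Y" by (rule assocPQ) (auto intro: GP GQ)
  have IX: "?X - conv ?X (P i) \<in> Ideal n E"
    unfolding X using assms by (intro I_sum T) auto
  have IY: "?Y - conv (P i) ?Y \<in> Ideal n E"
    unfolding Y using assms by (intro I_sum) (auto simp: assocPQ[symmetric] GP GQ intro!: T)
  have "(?X - conv ?X (P i)) - (?Y - conv (P i) ?Y) \<in> Ideal n E"
    by (rule I_diff[OF IX IY]) (auto intro!: GA_diff GA_conv GP GQ)
  then show ?thesis unfolding Z by simp
qed

end



lemma sum_apply': "sum F S w = (\<Sum>i\<in>S. F i w)"
  by (induction S rule: infinite_finite_induct) auto

lemma expand_GA: "finite (supp f) \<Longrightarrow> f = (\<Sum>a\<in>supp f. gscale (f a) (delta a))"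
proof
  fix w assume fin: "finite (supp f)"
  have "(\<Sum>a\<in>supp f. gscale (f a) (delta a)) w = (\<Sum>a\<in>supp f. if a = w then f a else 0)"
    unfolding sum_apply' by (intro sum.cong) (auto simp: gscale_def delta_apply)
  also have "\<dots> = f w" using fin by (simp add: sum.delta supp_def)
  finally show "f w = (\<Sum>a\<in>supp f. gscale (f a) (delta a)) w" by simp
qed

lemma conv_diff_right:
  assumes "finite (supp f)" "finite (supp h)" "finite (supp g)"
  shows "conv g (f - h) = conv g f - conv g h"
proof -
  have fd: "finite (supp (f - h))" using assms supp_diff[of f h] by (auto intro: finite_subset)
  have "conv g f = conv g ((f - h) + h)" by simp
  also have "\<dots> = conv g (f - h) + conv g h" by (rule conv_add_right[OF fd assms(2,3)])
  finally show ?thesis by simp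
qed

lemma conv_diff_left:
  assumes "finite (supp f)" "finite (supp h)" "finite (supp g)"
  shows "conv (f - h) g = conv f g - conv h g"
proof -
  have fd: "finite (supp (f - h))" using assms supp_diff[of f h] by (auto intro: finite_subset)
  have "conv f g = conv ((f - h) + h) g" by simp
  also have "\<dots> = conv (f - h) g + conv h g" by (rule conv_add_left[OF fd assms(2,3)])
  finally show ?thesis by simp
qed

lemma fin_scale: "finite (supp f) \<Longrightarrow> finite (supp (gscale c f))"
  using supp_scale[of c f] by (auto intro: finite_subset)

lemma gscale_diff: "gscale c x - gscale c y = gscale c (x - y)"
  by (rule ext) (simp add: gscale_def right_diff_distrib)

definition comm :: "(word \<Rightarrow> complex) \<Rightarrow> (word \<Rightarrow> complex) \<Rightarrow> (word \<Rightarrow> complex)" where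
  "comm x y = conv x y - conv y x"

lemma GA_comm: "x \<in> GA n \<Longrightarrow> y \<in> GA n \<Longrightarrow> comm x y \<in> GA n"
  unfolding comm_def by (intro GA_diff GA_conv)

lemma assocG: "x \<in> GA n \<Longrightarrow> y \<in> GA n \<Longrightarrow> z \<in> GA n \<Longrightarrow> conv (conv x y) z = conv x (conv y z)"
  by (rule conv_assoc) (auto simp: GA_iff)

lemma comm_mult_left:
  assumes X: "X \<in> GA n" and Y: "Y \<in> GA n" and Z: "Z \<in> GA n"
    and h1: "comm X Z \<in> Ideal n E" and h2: "comm Y Z \<in> Ideal n E"
  shows "comm (conv X Y) Z \<in> Ideal n E"
proof -
  have eq: "comm (conv X Y) Z = conv X (comm Y Z) + conv (comm X Z) Y"
    unfolding comm_def
    using X Y Z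
    by (simp add: conv_diff_right conv_diff_left GA_fin finite_supp_conv assocG GA_conv)
  show ?thesis unfolding eq
    by (intro I_add Ideal.lmult[OF h2 X] Ideal.rmult[OF h1 Y])
qed

lemma comm_mult_right:
  assumes X: "X \<in> GA n" and Y: "Y \<in> GA n" and Z: "Z \<in> GA n"
    and h1: "comm X Y \<in> Ideal n E" and h2: "comm X Z \<in> Ideal n E"
  shows "comm X (conv Y Z) \<in> Ideal n E"
proof -
  have eq: "comm X (conv Y Z) = conv Y (comm X Z) + conv (comm X Y) Z"
    unfolding comm_def
    using X Y Z
    by (simp add: conv_diff_right conv_diff_left GA_fin finite_supp_conv assocG GA_conv)
  show ?thesis unfolding eq
    by (intro I_add Ideal.lmult[OF h2 Y] Ideal.rmult[OF h1 Z])
qed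

lemma comm_lin_left:
  assumes "finite S" "\<And>i. i \<in> S \<Longrightarrow> F i \<in> GA n" "\<And>i. i \<in> S \<Longrightarrow> comm (F i) Z \<in> Ideal n E" "Z \<in> GA n"
  shows "comm (\<Sum>i\<in>S. gscale (c i) (F i)) Z \<in> Ideal n E"
proof -
  have "comm (\<Sum>i\<in>S. gscale (c i) (F i)) Z = (\<Sum>i\<in>S. gscale (c i) (comm (F i) Z))"
  proof -
    have A: "conv (\<Sum>i\<in>S. gscale (c i) (F i)) Z = (\<Sum>i\<in>S. gscale (c i) (conv (F i) Z))"
      using assms by (subst conv_sum_left) (auto intro!: sum.cong conv_scale_left fin_scale GA_scale GA_fin[where n=n])
    have B: "conv Z (\<Sum>i\<in>S. gscale (c i) (F i)) = (\<Sum>i\<in>S. gscale (c i) (conv Z (F i)))"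
      using assms by (subst conv_sum_right) (auto intro!: sum.cong conv_scale_right fin_scale GA_scale GA_fin[where n=n])
    show ?thesis unfolding comm_def A B by (simp add: sum_subtractf[symmetric] gscale_diff)
  qed
  also have "\<dots> \<in> Ideal n E"
    using assms by (intro I_sum I_scale GA_comm) auto
  finally show ?thesis .
qed

lemma comm_lin_right:
  assumes "finite S" "\<And>i. i \<in> S \<Longrightarrow> F i \<in> GA n" "\<And>i. i \<in> S \<Longrightarrow> comm Z (F i) \<in> Ideal n E" "Z \<in> GA n"
  shows "comm Z (\<Sum>i\<in>S. gscale (c i) (F i)) \<in> Ideal n E"
proof -
  have "comm Z (\<Sum>i\<in>S. gscale (c i) (F i)) = (\<Sum>i\<in>S. gscale (c i) (comm Z (F i)))"
  proof -
    have A: "conv (\<Sum>i\<in>S. gscale (c i) (F i)) Z = (\<Sum>i\<in>S. gscale (c i) (conv (F i) Z))"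
      using assms by (subst conv_sum_left) (auto intro!: sum.cong conv_scale_left fin_scale GA_scale GA_fin[where n=n])
    have B: "conv Z (\<Sum>i\<in>S. gscale (c i) (F i)) = (\<Sum>i\<in>S. gscale (c i) (conv Z (F i)))"
      using assms by (subst conv_sum_right) (auto intro!: sum.cong conv_scale_right fin_scale GA_scale GA_fin[where n=n])
    show ?thesis unfolding comm_def A B by (simp add: sum_subtractf[symmetric] gscale_diff)
  qed
  also have "\<dots> \<in> Ideal n E"
    using assms by (intro I_sum I_scale GA_comm) auto
  finally show ?thesis .
qed



lemma comm_gen:
  assumes "v < n" "u < n" "E v u" "E u v"
  shows "comm (delta [(v,1)]) (delta [(u,1)]) \<in> Ideal n E"
proof -
  have Gu: "delta [(u,1)] \<in> GA n" using assms by (intro GA_delta) (simp add: letter_ok_def)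
  have "comm (eproj v a) (delta [(u,1)]) \<in> Ideal n E" if a: "a < 3" for a
  proof -
    have "comm (eproj v a) (\<Sum>b<3. gscale (omega^b) (eproj u b)) \<in> Ideal n E"
    proof (rule comm_lin_right)
      show "comm (eproj v a) (eproj u b) \<in> Ideal n E" if "b \<in> {..<3}" for b
        unfolding comm_def using part1[OF assms a] that by simp
    qed (use assms in \<open>auto intro: GA_eproj\<close>)
    then show ?thesis by (simp only: ugen_eproj[symmetric])
  qed
  then have "comm (\<Sum>a<3. gscale (omega^a) (eproj v a)) (delta [(u,1)]) \<in> Ideal n E"
    using assms Gu by (intro comm_lin_left) (auto intro: GA_eproj)
  then show ?thesis by (simp only: ugen_eproj[symmetric])
qed

lemma delta_v2: "delta [(v,2)] = conv (delta [(v,1)]) (delta [(v,1)])"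
  by (simp add: conv_delta wmult_def numeral_2_eq_2)

lemma comm_letters:
  assumes "graph_on n E" "complete_on n E" "letter_ok n x" "letter_ok n y"
  shows "comm (delta [x]) (delta [y]) \<in> Ideal n E"
proof -
  obtain v k u m where x: "x = (v,k)" and y: "y = (u,m)" by (cases x, cases y)
  have v: "v < n" "k = 1 \<or> k = 2" and u: "u < n" "m = 1 \<or> m = 2"
    using assms x y by (auto simp: letter_ok_def)
  show ?thesis
  proof (cases "v = u")
    case True
    have "wmult [x] [y] = wmult [y] [x]" using x y True by (simp add: wmult_def add.commute)
    then have "comm (delta [x]) (delta [y]) = 0" by (simp add: comm_def conv_delta)
    then show ?thesis using I_zero by metis
  next
    case False
    have e: "E v u" "E u v" using assms(2) v u False by (auto simp: complete_on_def)
    let ?g = "delta [(v,1)]" and ?h = "delta [(u,1)]"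
    have Gg: "?g \<in> GA n" and Gh: "?h \<in> GA n" using v u by (auto intro!: GA_delta simp: letter_ok_def)
    have c11: "comm ?g ?h \<in> Ideal n E" by (rule comm_gen[OF v(1) u(1) e])
    have L: "comm (delta [(v,k')]) ?h \<in> Ideal n E" if "k' = 1 \<or> k' = 2" for k'
      using that
    proof
      assume k2: "k' = 2"
      have "comm (conv ?g ?g) ?h \<in> Ideal n E" using c11 Gg Gh by (intro comm_mult_left)
      then show ?thesis using k2 by (simp add: delta_v2)
    qed (use c11 in simp)
    have Gk: "delta [(v,k)] \<in> GA n" using v by (auto intro!: GA_delta simp: letter_ok_def)
    have "comm (delta [(v,k)]) (delta [(u,m)]) \<in> Ideal n E"
      using u(2)
    proof
      assume m2: "m = 2"
      have "comm (delta [(v,k)]) (conv ?h ?h) \<in> Ideal n E" using L[OF v(2)] Gk Gh by (intro comm_mult_right)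
      then show ?thesis using m2 by (simp add: delta_v2)
    qed (use L[OF v(2)] in simp)
    then show ?thesis using x y by simp
  qed
qed

lemma delta_Cons: "reduced n (y # b) \<Longrightarrow> delta (y # b) = conv (delta [y]) (delta b)"
proof -
  assume "reduced n (y # b)"
  then have "cons_letter y b = y # b" by (intro cons_letter_fresh) (auto simp: reduced_Cons)
  then show ?thesis by (simp add: conv_delta wmult_def)
qed

lemma comm_letter_word:
  assumes "graph_on n E" "complete_on n E" "letter_ok n x"
  shows "reduced n b \<Longrightarrow> comm (delta [x]) (delta b) \<in> Ideal n E"
proof (induction b)
  case Nil
  have "comm (delta [x]) (delta []) = 0" by (cases x) (simp add: comm_def conv_delta wmult_def)
  then show ?case using I_zero by metis
next
  case (Cons y b)
  have r: "letter_ok n y" "reduced n b" using Cons.prems by (auto simp: reduced_Cons)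
  have G: "delta [x] \<in> GA n" "delta [y] \<in> GA n" "delta b \<in> GA n"
    using assms r by (auto intro!: GA_delta)
  show ?case unfolding delta_Cons[OF Cons.prems]
    by (rule comm_mult_right[OF G comm_letters[OF assms r(1)] Cons.IH[OF r(2)]])
qed

lemma comm_word_word:
  assumes "graph_on n E" "complete_on n E" "reduced n b"
  shows "reduced n a \<Longrightarrow> comm (delta a) (delta b) \<in> Ideal n E"
proof (induction a)
  case Nil
  have "comm (delta []) (delta b) = 0" using assms by (simp add: comm_def conv_delta wmult_Nil wmult_Nil2[OF assms(3)])
  then show ?case using I_zero by metis
next
  case (Cons x a)
  have r: "letter_ok n x" "reduced n a" using Cons.prems by (auto simp: reduced_Cons)
  have G: "delta [x] \<in> GA n" "delta a \<in> GA n" "delta b \<in> GA n"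
    using assms r by (auto intro!: GA_delta)
  show ?case unfolding delta_Cons[OF Cons.prems]
    by (rule comm_mult_left[OF G comm_letter_word[OF assms(1,2) r(1) assms(3)] Cons.IH[OF r(2)]])
qed

lemma comm_all:
  assumes "graph_on n E" "complete_on n E" "x \<in> GA n" "y \<in> GA n"
  shows "comm x y \<in> Ideal n E"
proof -
  have fx: "finite (supp x)" and fy: "finite (supp y)" using assms by (auto simp: GA_iff)
  have rx: "\<And>a. a \<in> supp x \<Longrightarrow> reduced n a" and ry: "\<And>b. b \<in> supp y \<Longrightarrow> reduced n b"
    using assms by (auto simp: GA_iff Fgrp_def)
  have "comm (delta a) y \<in> Ideal n E" if a: "a \<in> supp x" for a
  proof -
    have "comm (delta a) (\<Sum>b\<in>supp y. gscale (y b) (delta b)) \<in> Ideal n E"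
      using fy rx[OF a] ry assms by (intro comm_lin_right comm_word_word GA_delta) auto
    then show ?thesis by (simp only: expand_GA[OF fy, symmetric])
  qed
  then have "comm (\<Sum>a\<in>supp x. gscale (x a) (delta a)) y \<in> Ideal n E"
    using fx rx assms by (intro comm_lin_left GA_delta) auto
  then show ?thesis by (simp only: expand_GA[OF fx, symmetric])
qed

theorem mainTheorem17:
  fixes n :: nat and E :: "nat \<Rightarrow> nat \<Rightarrow> bool"
  assumes "graph_on n E"
  shows "(\<forall>v w i j. E v w \<and> i < 3 \<and> j < 3 \<longrightarrow>
            gsub (conv (eproj v i) (eproj w j)) (conv (eproj w j) (eproj v i)) \<in> Ideal n E)
       \<and> (complete_on n E \<longrightarrow>
            (\<forall>x\<in>GA n. \<forall>y\<in>GA n. gsub (conv x y) (conv y x) \<in> Ideal n E))"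
proof (intro conjI allI impI ballI)
  fix v w i j :: nat assume h: "E v w \<and> i < 3 \<and> j < 3"
  then have "v < n" "w < n" "E w v" using assms by (auto simp: graph_on_def)
  then have "conv (eproj v i) (eproj w j) - conv (eproj w j) (eproj v i) \<in> Ideal n E"
    using h by (intro part1) auto
  then show "gsub (conv (eproj v i) (eproj w j)) (conv (eproj w j) (eproj v i)) \<in> Ideal n E"
    by (simp add: gsub_def fun_diff_def)
next
  fix x y :: "word \<Rightarrow> complex" assume "complete_on n E" "x \<in> GA n" "y \<in> GA n"
  then have "comm x y \<in> Ideal n E" using assms by (intro comm_all) auto
  then show "gsub (conv x y) (conv y x) \<in> Ideal n E"
    by (simp add: gsub_def comm_def fun_diff_def)
qed


end
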